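(* Let $F : L_n \to \Delta K$ be a non-degenerate $2$-filtration and $p$ a path in $L_n$. Suppose simplex $\sigma$ is added to the 1-filtration induced by $p$ at the step $(i,j)\to(i+\delta_i,j+\delta_j)$, simplex $\tau$ is added at the step $(k,l)\to(k+\delta_k,l+\delta_l)$, and $\sigma$ and $\tau$ are paired in this 1-filtration. Then $\sigma$ and $\tau$ are paired in the 1-filtration induced by every path that takes these two steps.
   Context: $K$ is a finite simplicial complex, coefficients in a field. $L_n=\{0,\dots,n\}^2$ with product order, $\bot=(0,0)$, $\top=(n,n)$. A $2$-filtration is a monotone map $F$ from $L_n$ to subcomplexes of $K$ with $F(\bot)=\emptyset$, $F(\top)=K$. Lower corners of a simplex are the minimal elements of the upset of grades where it is present; $F$ is non-degenerate if any two distinct lower corners differ in both coordinates. A path is a sequence of grades $(0,0)=g_0,\dots,g_{2n}=(n,n)$ where each step $g_s\to g_{s+1}$ adds $(1,0)$ or $(0,1)$ (so $\delta$'s above are in $\{0,1\}$ with exactly one equal to $1$); it induces the 1-filtration $s\mapsto F(g_s)$, and a simplex is added at the step $g_s\to g_{s+1}$ if it lies in $F(g_{s+1})\setminus F(g_s)$ (by non-degeneracy at most one simplex per step). Two simplices are paired in such a 1-filtration if they form a pair of the standard persistence pairing (the negative simplex kills the class created by the positive one; equivalently via the lowest nonzero entries of a reduced matrix $R=DV$). *)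

theory Defs
  imports Main
begin

definition simplicial_complex :: "'v set set \<Rightarrow> bool" where
  "simplicial_complex K \<longleftrightarrow> finite K \<and>
     (\<forall>s\<in>K. finite s \<and> s \<noteq> {}) \<and>
     (\<forall>s\<in>K. \<forall>t. t \<subseteq> s \<and> t \<noteq> {} \<longrightarrow> t \<in> K)"

definition subcomplex :: "'v set set \<Rightarrow> 'v set set \<Rightarrow> bool" where
  "subcomplex L K \<longleftrightarrow> L \<subseteq> K \<and> (\<forall>s\<in>L. \<forall>t. t \<subseteq> s \<and> t \<noteq> {} \<longrightarrow> t \<in> L)"

definition grid :: "nat \<Rightarrow> (nat \<times> nat) set" where
  "grid n = {0..n} \<times> {0..n}"

definition grade_le :: "nat \<times> nat \<Rightarrow> nat \<times> nat \<Rightarrow> bool" where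
  "grade_le g h \<longleftrightarrow> fst g \<le> fst h \<and> snd g \<le> snd h"

definition two_filtration :: "'v set set \<Rightarrow> nat \<Rightarrow> (nat \<times> nat \<Rightarrow> 'v set set) \<Rightarrow> bool" where
  "two_filtration K n F \<longleftrightarrow>
     (\<forall>g\<in>grid n. subcomplex (F g) K) \<and>
     (\<forall>g\<in>grid n. \<forall>h\<in>grid n. grade_le g h \<longrightarrow> F g \<subseteq> F h) \<and>
     F (0,0) = {} \<and> F (n,n) = K"

definition lower_corners :: "nat \<Rightarrow> (nat \<times> nat \<Rightarrow> 'v set set) \<Rightarrow> 'v set \<Rightarrow> (nat \<times> nat) set" where
  "lower_corners n F s = {g \<in> grid n. s \<in> F g \<and>
      (\<forall>h\<in>grid n. s \<in> F h \<and> grade_le h g \<longrightarrow> h = g)}"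

definition non_degenerate :: "'v set set \<Rightarrow> nat \<Rightarrow> (nat \<times> nat \<Rightarrow> 'v set set) \<Rightarrow> bool" where
  "non_degenerate K n F \<longleftrightarrow>
     (\<forall>s\<in>K. \<forall>t\<in>K. \<forall>g\<in>lower_corners n F s. \<forall>h\<in>lower_corners n F t.
        (s, g) \<noteq> (t, h) \<longrightarrow> fst g \<noteq> fst h \<and> snd g \<noteq> snd h)"

definition is_path :: "nat \<Rightarrow> (nat \<Rightarrow> nat \<times> nat) \<Rightarrow> bool" where
  "is_path n p \<longleftrightarrow> p 0 = (0,0) \<and> p (2*n) = (n,n) \<and>
     (\<forall>s<2*n. p (Suc s) = (fst (p s) + 1, snd (p s)) \<or> p (Suc s) = (fst (p s), snd (p s) + 1))"

definition takes_step :: "nat \<Rightarrow> (nat \<Rightarrow> nat \<times> nat) \<Rightarrow> nat \<times> nat \<Rightarrow> nat \<times> nat \<Rightarrow> bool" where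
  "takes_step n p g h \<longleftrightarrow> (\<exists>s<2*n. p s = g \<and> p (Suc s) = h)"

text \<open>The step index at which a simplex enters the 1-filtration s |-> F (p s).\<close>
definition entry_time :: "nat \<Rightarrow> (nat \<times> nat \<Rightarrow> 'v set set) \<Rightarrow> (nat \<Rightarrow> nat \<times> nat) \<Rightarrow> 'v set \<Rightarrow> nat" where
  "entry_time n F p s = (THE i. i < 2*n \<and> s \<in> F (p (Suc i)) \<and> s \<notin> F (p i))"

text \<open>Coefficient of the face s in the boundary of t (vertices ordered by the linorder):
  (-1)^k where k is the position of the removed vertex.\<close>
definition bd_coeff :: "'v::linorder set \<Rightarrow> 'v set \<Rightarrow> 'k::field" where
  "bd_coeff s t = (if s \<subseteq> t \<and> card t = card s + 1
      then (-1) ^ card {v \<in> s. v < Min (t - s)} else 0)"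

definition is_low :: "'v set set \<Rightarrow> ('v set \<Rightarrow> nat) \<Rightarrow> ('v set \<Rightarrow> 'v set \<Rightarrow> 'k::field) \<Rightarrow> 'v set \<Rightarrow> 'v set \<Rightarrow> bool" where
  "is_low K t R j i \<longleftrightarrow> i \<in> K \<and> R i j \<noteq> 0 \<and> (\<forall>i'\<in>K. R i' j \<noteq> 0 \<longrightarrow> t i' \<le> t i)"

text \<open>Persistence pairing of the 1-filtration induced by path p (simplices ordered by entry time),
  via a reduced matrix R = D V with V upper triangular and invertible.\<close>
definition paired :: "'k::field itself \<Rightarrow> 'v::linorder set set \<Rightarrow> nat \<Rightarrow> (nat \<times> nat \<Rightarrow> 'v set set)
    \<Rightarrow> (nat \<Rightarrow> nat \<times> nat) \<Rightarrow> 'v set \<Rightarrow> 'v set \<Rightarrow> bool" where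
  "paired _ K n F p a b \<longleftrightarrow>
    (let t = entry_time n F p in
     \<exists>(R :: 'v set \<Rightarrow> 'v set \<Rightarrow> 'k) (V :: 'v set \<Rightarrow> 'v set \<Rightarrow> 'k).
       (\<forall>i\<in>K. \<forall>j\<in>K. R i j = (\<Sum>k\<in>K. bd_coeff i k * V k j)) \<and>
       (\<forall>k\<in>K. \<forall>j\<in>K. V k j \<noteq> 0 \<longrightarrow> t k \<le> t j) \<and>
       (\<forall>j\<in>K. V j j \<noteq> 0) \<and>
       (\<forall>j\<in>K. \<forall>j'\<in>K. \<forall>i. j \<noteq> j' \<and> is_low K t R j i \<and> is_low K t R j' i \<longrightarrow> False) \<and>
       is_low K t R b a)"

end

theory Submission
  imports Defs
begin

definition sp :: "('a \<Rightarrow> 'a \<Rightarrow> 'k::field) \<Rightarrow> 'a set \<Rightarrow> 'a set \<Rightarrow> ('a \<Rightarrow> 'k) \<Rightarrow> bool" where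
  "sp M A C v \<longleftrightarrow> (\<exists>c. \<forall>i\<in>A. v i = (\<Sum>k\<in>C. c k * M i k))"

lemma sp_zero: "sp M A C (\<lambda>i. 0)"
  unfolding sp_def by (rule exI[of _ "\<lambda>_. 0"]) simp

lemma sp_add: assumes "sp M A C v" "sp M A C w" shows "sp M A C (\<lambda>i. v i + w i)"
proof -
  from assms obtain c d where c: "\<forall>i\<in>A. v i = (\<Sum>k\<in>C. c k * M i k)"
    and d: "\<forall>i\<in>A. w i = (\<Sum>k\<in>C. d k * M i k)" unfolding sp_def by blast
  show ?thesis unfolding sp_def
    by (rule exI[of _ "\<lambda>k. c k + d k"]) (simp add: c d distrib_right sum.distrib)
qed

lemma sp_scale: assumes "sp M A C v" shows "sp M A C (\<lambda>i. a * v i)"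
proof -
  from assms obtain c where c: "\<forall>i\<in>A. v i = (\<Sum>k\<in>C. c k * M i k)" unfolding sp_def by blast
  show ?thesis unfolding sp_def
    by (rule exI[of _ "\<lambda>k. a * c k"]) (simp add: c sum_distrib_left mult.assoc)
qed

lemma sp_cong: assumes "sp M A C w" "\<forall>i\<in>A. v i = w i" shows "sp M A C v"
  using assms unfolding sp_def by auto

lemma sp_col: assumes "j \<in> C" "finite C" shows "sp M A C (\<lambda>i. M i j)"
  unfolding sp_def
  by (rule exI[of _ "\<lambda>k. if k = j then 1 else 0"]) (simp add: assms if_distrib[where f="\<lambda>x. x * _"] sum.delta' cong: if_cong)

lemma sp_sum: assumes "finite S" "\<forall>k\<in>S. sp M A C (f k)" shows "sp M A C (\<lambda>i. \<Sum>k\<in>S. f k i)"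
  using assms
proof (induction S rule: finite_induct)
  case empty then show ?case by (simp add: sp_zero)
next
  case (insert x F)
  then show ?case by (simp add: sp_add)
qed

lemma sp_trans: assumes "finite C'" "\<forall>j\<in>C'. sp M A C (\<lambda>i. N i j)" "sp N A C' v"
  shows "sp M A C v"
proof -
  from assms(3) obtain c where c: "\<forall>i\<in>A. v i = (\<Sum>k\<in>C'. c k * N i k)" unfolding sp_def by blast
  have "sp M A C (\<lambda>i. \<Sum>k\<in>C'. c k * N i k)"
    using assms(1,2) by (intro sp_sum) (auto intro: sp_scale)
  then show ?thesis using c sp_cong by blast
qed

definition reduc :: "'v set set \<Rightarrow> ('v set \<Rightarrow> nat) \<Rightarrow> ('v set \<Rightarrow> 'v set \<Rightarrow> 'k::field) \<Rightarrow> ('v set \<Rightarrow> 'v set \<Rightarrow> 'k) \<Rightarrow> ('v set \<Rightarrow> 'v set \<Rightarrow> 'k) \<Rightarrow> bool" where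
  "reduc K t D R V \<longleftrightarrow> (\<forall>i\<in>K. \<forall>j\<in>K. R i j = (\<Sum>k\<in>K. D i k * V k j)) \<and>
       (\<forall>k\<in>K. \<forall>j\<in>K. V k j \<noteq> 0 \<longrightarrow> t k \<le> t j) \<and>
       (\<forall>j\<in>K. V j j \<noteq> 0) \<and>
       (\<forall>j\<in>K. \<forall>j'\<in>K. \<forall>i. j \<noteq> j' \<and> is_low K t R j i \<and> is_low K t R j' i \<longrightarrow> False)"

lemma low_exists:
  assumes "finite K" "i \<in> K" "R i j \<noteq> 0"
  shows "\<exists>l. is_low K t R j l"
proof -
  let ?S = "{i\<in>K. R i j \<noteq> 0}"
  have fin: "finite (t ` ?S)" using assms by simp
  have ne: "t ` ?S \<noteq> {}" using assms by auto
  from Max_in[OF fin ne] obtain l where l: "l \<in> ?S" "t l = Max (t ` ?S)" by auto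
  have "\<forall>i'\<in>K. R i' j \<noteq> 0 \<longrightarrow> t i' \<le> t l" using l Max_ge[OF fin] by auto
  then show ?thesis using l unfolding is_low_def by auto
qed

lemma low_unique:
  assumes "inj_on t K" "is_low K t R j l" "is_low K t R j l'" shows "l = l'"
  using assms unfolding is_low_def inj_on_def by (meson antisym)

lemma low_ge: "is_low K t R j l \<Longrightarrow> i \<in> K \<Longrightarrow> R i j \<noteq> 0 \<Longrightarrow> t i \<le> t l"
  unfolding is_low_def by auto

lemma L2:
  assumes fin: "finite K" and inj: "inj_on t K" and red: "reduc K t D R V"
    and tK: "\<tau> \<in> K" and CK: "C \<subseteq> K" and tC: "\<tau> \<notin> C"
    and nz: "i1 \<in> K" "s \<le> t i1" "R i1 \<tau> \<noteq> 0"
  shows "\<not> sp R {x\<in>K. s \<le> t x} C (\<lambda>i. R i \<tau>)"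
proof
  assume "sp R {x\<in>K. s \<le> t x} C (\<lambda>i. R i \<tau>)"
  then obtain c where c: "\<forall>i\<in>{x\<in>K. s \<le> t x}. R i \<tau> = (\<Sum>k\<in>C. c k * R i k)" unfolding sp_def by blast
  have finC: "finite C" using fin CK finite_subset by blast
  from low_exists[where t=t and R=R and j=\<tau>, OF fin nz(1,3)] obtain i0 where i0: "is_low K t R \<tau> i0" by blast
  have i0K: "i0 \<in> K" "R i0 \<tau> \<noteq> 0" using i0 unfolding is_low_def by auto
  have si0: "s \<le> t i0" using low_ge[OF i0 nz(1,3)] nz(2) by simp
  let ?Rows = "{i\<in>K. s \<le> t i \<and> (i = i0 \<or> (\<exists>k\<in>C. c k \<noteq> 0 \<and> is_low K t R k i))}"
  have fin2: "finite (t ` ?Rows)" using fin by simp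
  have ne: "t ` ?Rows \<noteq> {}" using i0K si0 by auto
  from Max_in[OF fin2 ne] obtain r where r': "Max (t ` ?Rows) = t r" "r \<in> ?Rows"
    by (rule imageE)
  have r: "r \<in> ?Rows" "t r = Max (t ` ?Rows)" using r' by auto
  have rmax: "\<And>i. i \<in> ?Rows \<Longrightarrow> t i \<le> t r" using r(2) Max_ge[OF fin2] by auto
  have rK: "r \<in> K" "s \<le> t r" using r by auto
  have X: "is_low K t R k r" if k: "k \<in> C" "c k \<noteq> 0" "R r k \<noteq> 0" for k
  proof -
    from low_exists[where t=t and R=R and j=k, OF fin rK(1) k(3)] obtain l where l: "is_low K t R k l" by blast
    have "t r \<le> t l" using low_ge[OF l rK(1) k(3)] .
    moreover have lK: "l \<in> K" using l unfolding is_low_def by auto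
    ultimately have "l \<in> ?Rows" using k l rK by auto
    then have "t l \<le> t r" by (rule rmax)
    then have "t l = t r" using \<open>t r \<le> t l\<close> by simp
    then have "l = r" using inj lK rK unfolding inj_on_def by auto
    then show ?thesis using l by simp
  qed
  have red4: "\<And>j j' i. j \<in> K \<Longrightarrow> j' \<in> K \<Longrightarrow> j \<noteq> j' \<Longrightarrow> is_low K t R j i \<Longrightarrow> is_low K t R j' i \<Longrightarrow> False"
    using red unfolding reduc_def by blast
  have sumr: "R r \<tau> = (\<Sum>k\<in>C. c k * R r k)" using c rK by auto
  show False
  proof (cases "\<exists>k\<in>C. c k \<noteq> 0 \<and> R r k \<noteq> 0")
    case True
    then obtain k where k: "k \<in> C" "c k \<noteq> 0" "R r k \<noteq> 0" by blast
    have lowk: "is_low K t R k r" using X k by blast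
    have others: "c k' * R r k' = 0" if "k' \<in> C - {k}" for k'
    proof (rule ccontr)
      assume "c k' * R r k' \<noteq> 0"
      then have "is_low K t R k' r" using that by (intro X) auto
      then show False using CK k(1) that lowk by (intro red4[of k k' r]) auto
    qed
    have "(\<Sum>k\<in>C. c k * R r k) = c k * R r k + (\<Sum>k'\<in>C - {k}. c k' * R r k')"
      by (rule sum.remove[OF finC k(1)])
    also have "(\<Sum>k'\<in>C - {k}. c k' * R r k') = 0" using others by (rule sum.neutral[rule_format])
    then have "c k * R r k + (\<Sum>k'\<in>C - {k}. c k' * R r k') = c k * R r k" by simp
    finally have "R r \<tau> \<noteq> 0" using sumr k by simp
    then have "t r \<le> t i0" using low_ge[OF i0 rK(1)] by simp
    moreover have "t i0 \<le> t r" using i0K si0 by (intro rmax) simp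
    ultimately have "t r = t i0" by simp
    then have "r = i0" using inj_onD[OF inj] rK(1) i0K(1) by blast
    then show False using lowk i0 tK k(1) CK tC by (intro red4[of \<tau> k i0]) auto
  next
    case False
    then have "\<forall>k\<in>C. c k * R r k = 0" by simp
    then have "(\<Sum>k\<in>C. c k * R r k) = 0" by (rule sum.neutral)
    then have "R r \<tau> = 0" using sumr by simp
    then have "r \<noteq> i0" using i0K by auto
    then obtain k where "k \<in> C" "c k \<noteq> 0" "is_low K t R k r" using r(1) by blast
    then show False using False unfolding is_low_def by blast
  qed
qed

lemma col_split:
  assumes "finite K" "j \<in> K"
  shows "(\<Sum>k\<in>K. D i k * V k j) = D i j * V j j + (\<Sum>k\<in>K-{j}. D i k * V k j)"
  using sum.remove[OF assms, of "\<lambda>k. D i k * V k j"] .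

lemma reducD1: "reduc K t D R V \<Longrightarrow> i \<in> K \<Longrightarrow> j \<in> K \<Longrightarrow> R i j = (\<Sum>k\<in>K. D i k * V k j)"
  unfolding reduc_def by blast
lemma reducD2: "reduc K t D R V \<Longrightarrow> k \<in> K \<Longrightarrow> j \<in> K \<Longrightarrow> V k j \<noteq> 0 \<Longrightarrow> t k \<le> t j"
  unfolding reduc_def by blast
lemma reducD3: "reduc K t D R V \<Longrightarrow> j \<in> K \<Longrightarrow> V j j \<noteq> 0"
  unfolding reduc_def by blast
lemma reducD4: "reduc K t D R V \<Longrightarrow> j \<in> K \<Longrightarrow> j' \<in> K \<Longrightarrow> j \<noteq> j' \<Longrightarrow> is_low K t R j i \<Longrightarrow> is_low K t R j' i \<Longrightarrow> False"
  unfolding reduc_def by blast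

lemma L0:
  assumes fin: "finite K" and inj: "inj_on t K" and red: "reduc K t D R V"
    and AK: "A \<subseteq> K"
  shows "j \<in> K \<Longrightarrow> t j < T \<Longrightarrow> sp R A {x\<in>K. t x < T} (\<lambda>i. D i j)"
proof (induction "t j" arbitrary: j rule: less_induct)
  case less
  let ?C = "{x\<in>K. t x < T}"
  have finC: "finite ?C" using fin by simp
  have Rj: "\<forall>i\<in>A. R i j = D i j * V j j + (\<Sum>k\<in>K-{j}. D i k * V k j)"
  proof
    fix i assume "i \<in> A"
    then have "R i j = (\<Sum>k\<in>K. D i k * V k j)" using red AK less.prems unfolding reduc_def by auto
    then show "R i j = D i j * V j j + (\<Sum>k\<in>K-{j}. D i k * V k j)"
      using col_split[OF fin less.prems(1), of D i V] by simp
  qed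
  have Vjj: "V j j \<noteq> 0" using red less.prems unfolding reduc_def by auto
  have s1: "sp R A ?C (\<lambda>i. R i j)" using less.prems by (intro sp_col finC) simp
  have s2: "sp R A ?C (\<lambda>i. \<Sum>k\<in>K-{j}. D i k * V k j)"
  proof (rule sp_sum)
    show "finite (K - {j})" using fin by simp
    show "\<forall>k\<in>K - {j}. sp R A ?C (\<lambda>i. D i k * V k j)"
    proof
      fix k assume k: "k \<in> K - {j}"
      show "sp R A ?C (\<lambda>i. D i k * V k j)"
      proof (cases "V k j = 0")
        case True then show ?thesis using sp_zero by simp
      next
        case False
        then have "t k \<le> t j" using red k less.prems unfolding reduc_def by auto
        moreover have "t k \<noteq> t j" using inj k less.prems(1) unfolding inj_on_def by auto
        ultimately have "t k < t j" by simp
        then have "sp R A ?C (\<lambda>i. D i k)" using less.hyps k less.prems by auto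
        then have "sp R A ?C (\<lambda>i. V k j * D i k)" by (rule sp_scale)
        then show ?thesis by (simp add: mult.commute)
      qed
    qed
  qed
  have "sp R A ?C (\<lambda>i. inverse (V j j) * (R i j + (-1) * (\<Sum>k\<in>K-{j}. D i k * V k j)))"
    by (intro sp_scale sp_add s1 s2)
  moreover have "\<forall>i\<in>A. D i j = inverse (V j j) * (R i j + (-1) * (\<Sum>k\<in>K-{j}. D i k * V k j))"
    using Rj Vjj by (simp add: field_simps)
  ultimately show ?case by (rule sp_cong)
qed

lemma L1:
  assumes fin: "finite K" and inj: "inj_on t K" and red: "reduc K t D R V"
    and AK: "A \<subseteq> K" and tK: "\<tau> \<in> K"
  shows "sp D A {x\<in>K. t x < t \<tau>} (\<lambda>i. D i \<tau>) \<longleftrightarrow> sp R A {x\<in>K. t x < t \<tau>} (\<lambda>i. R i \<tau>)"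
proof -
  let ?C = "{x\<in>K. t x < t \<tau>}"
  have finC: "finite ?C" using fin by simp
  have Vtt: "V \<tau> \<tau> \<noteq> 0" using reducD3[OF red tK] .
  note Req = reducD1[OF red] and Vtri = reducD2[OF red]
  have hR: "\<forall>i\<in>A. R i \<tau> = D i \<tau> * V \<tau> \<tau> + (\<Sum>k\<in>?C. D i k * V k \<tau>)"
  proof
    fix i assume i: "i \<in> A"
    then have "R i \<tau> = (\<Sum>k\<in>K. D i k * V k \<tau>)" using AK tK by (intro Req) auto
    also have "\<dots> = D i \<tau> * V \<tau> \<tau> + (\<Sum>k\<in>K-{\<tau>}. D i k * V k \<tau>)"
      by (rule col_split[OF fin tK])
    also have "(\<Sum>k\<in>K-{\<tau>}. D i k * V k \<tau>) = (\<Sum>k\<in>?C. D i k * V k \<tau>)"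
    proof (rule sum.mono_neutral_right)
      show "finite (K - {\<tau>})" using fin by simp
      show "?C \<subseteq> K - {\<tau>}" by auto
      show "\<forall>k\<in>K - {\<tau>} - ?C. D i k * V k \<tau> = 0"
      proof
        fix k assume k: "k \<in> K - {\<tau>} - ?C"
        show "D i k * V k \<tau> = 0"
        proof (rule ccontr)
          assume "D i k * V k \<tau> \<noteq> 0"
          then have "t k \<le> t \<tau>" using k tK by (intro Vtri) auto
          moreover have "t k \<noteq> t \<tau>" using inj k tK unfolding inj_on_def by auto
          ultimately show False using k by auto
        qed
      qed
    qed
    finally show "R i \<tau> = D i \<tau> * V \<tau> \<tau> + (\<Sum>k\<in>?C. D i k * V k \<tau>)" .
  qed
  have RinD: "\<forall>j\<in>?C. sp D A ?C (\<lambda>i. R i j)"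
  proof
    fix j assume j: "j \<in> ?C"
    have "sp D A ?C (\<lambda>i. \<Sum>k\<in>K. D i k * V k j)"
    proof (rule sp_sum[OF fin], rule)
      fix k assume k: "k \<in> K"
      show "sp D A ?C (\<lambda>i. D i k * V k j)"
      proof (cases "V k j = 0")
        case True then show ?thesis using sp_zero by simp
      next
        case False
        then have "t k \<le> t j" using k j by (intro Vtri) auto
        then have "k \<in> ?C" using j k by auto
        then have "sp D A ?C (\<lambda>i. V k j * D i k)" by (intro sp_scale sp_col finC)
        then show ?thesis by (simp add: mult.commute)
      qed
    qed
    moreover have "\<forall>i\<in>A. R i j = (\<Sum>k\<in>K. D i k * V k j)" using AK j Req by auto
    ultimately show "sp D A ?C (\<lambda>i. R i j)" by (rule sp_cong)
  qed
  have DinR: "\<forall>j\<in>?C. sp R A ?C (\<lambda>i. D i j)"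
  proof
    fix j assume "j \<in> ?C"
    then show "sp R A ?C (\<lambda>i. D i j)" by (intro L0[OF fin inj red AK]) auto
  qed
  have S: "sp D A ?C (\<lambda>i. \<Sum>k\<in>?C. D i k * V k \<tau>)"
  proof (rule sp_sum[OF finC], rule)
    fix k assume "k \<in> ?C"
    then have "sp D A ?C (\<lambda>i. V k \<tau> * D i k)" by (intro sp_scale sp_col finC)
    then show "sp D A ?C (\<lambda>i. D i k * V k \<tau>)" by (simp add: mult.commute)
  qed
  show ?thesis
  proof
    assume "sp D A ?C (\<lambda>i. D i \<tau>)"
    then have "sp D A ?C (\<lambda>i. V \<tau> \<tau> * D i \<tau> + (\<Sum>k\<in>?C. D i k * V k \<tau>))"
      by (intro sp_add sp_scale S)
    moreover have "\<forall>i\<in>A. R i \<tau> = V \<tau> \<tau> * D i \<tau> + (\<Sum>k\<in>?C. D i k * V k \<tau>)"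
      using hR by (simp add: mult.commute)
    ultimately have "sp D A ?C (\<lambda>i. R i \<tau>)" by (rule sp_cong)
    then show "sp R A ?C (\<lambda>i. R i \<tau>)" by (rule sp_trans[OF finC DinR])
  next
    assume "sp R A ?C (\<lambda>i. R i \<tau>)"
    then have "sp D A ?C (\<lambda>i. R i \<tau>)" by (rule sp_trans[OF finC RinD])
    then have "sp D A ?C (\<lambda>i. inverse (V \<tau> \<tau>) * (R i \<tau> + (-1) * (\<Sum>k\<in>?C. D i k * V k \<tau>)))"
      by (intro sp_scale sp_add S)
    moreover have "\<forall>i\<in>A. D i \<tau> = inverse (V \<tau> \<tau>) * (R i \<tau> + (-1) * (\<Sum>k\<in>?C. D i k * V k \<tau>))"
      using hR Vtt by (simp add: field_simps)
    ultimately show "sp D A ?C (\<lambda>i. D i \<tau>)" by (rule sp_cong)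
  qed
qed

lemma Z:
  assumes fin: "finite K" and inj: "inj_on t K" and red: "reduc K t D R V" and tK: "\<tau> \<in> K"
  shows "sp R {x\<in>K. s \<le> t x} {x\<in>K. t x < t \<tau>} (\<lambda>i. R i \<tau>) \<longleftrightarrow> (\<forall>i\<in>K. s \<le> t i \<longrightarrow> R i \<tau> = 0)"
proof
  assume a: "sp R {x\<in>K. s \<le> t x} {x\<in>K. t x < t \<tau>} (\<lambda>i. R i \<tau>)"
  show "\<forall>i\<in>K. s \<le> t i \<longrightarrow> R i \<tau> = 0"
  proof (rule ccontr)
    assume "\<not> (\<forall>i\<in>K. s \<le> t i \<longrightarrow> R i \<tau> = 0)"
    then obtain i1 where "i1 \<in> K" "s \<le> t i1" "R i1 \<tau> \<noteq> 0" by blast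
    from L2[OF fin inj red tK _ _ this] a show False by auto
  qed
next
  assume "\<forall>i\<in>K. s \<le> t i \<longrightarrow> R i \<tau> = 0"
  then have "\<forall>i\<in>{x\<in>K. s \<le> t x}. R i \<tau> = 0" by auto
  then show "sp R {x\<in>K. s \<le> t x} {x\<in>K. t x < t \<tau>} (\<lambda>i. R i \<tau>)"
    by (rule sp_cong[OF sp_zero])
qed

lemma key:
  assumes fin: "finite K" and inj: "inj_on t K" and red: "reduc K t D R V"
    and sK: "\<sigma> \<in> K" and tK: "\<tau> \<in> K"
  shows "is_low K t R \<tau> \<sigma> \<longleftrightarrow>
    (\<not> sp D {x\<in>K. t \<sigma> \<le> t x} {x\<in>K. t x < t \<tau>} (\<lambda>i. D i \<tau>) \<and>
     sp D {x\<in>K. Suc (t \<sigma>) \<le> t x} {x\<in>K. t x < t \<tau>} (\<lambda>i. D i \<tau>))"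
proof -
  have e1: "sp D {x\<in>K. t \<sigma> \<le> t x} {x\<in>K. t x < t \<tau>} (\<lambda>i. D i \<tau>) \<longleftrightarrow>
     (\<forall>i\<in>K. t \<sigma> \<le> t i \<longrightarrow> R i \<tau> = 0)"
    using L1[OF fin inj red _ tK, of "{x\<in>K. t \<sigma> \<le> t x}"] Z[OF fin inj red tK, of "t \<sigma>"] by auto
  have e2: "sp D {x\<in>K. Suc (t \<sigma>) \<le> t x} {x\<in>K. t x < t \<tau>} (\<lambda>i. D i \<tau>) \<longleftrightarrow>
     (\<forall>i\<in>K. Suc (t \<sigma>) \<le> t i \<longrightarrow> R i \<tau> = 0)"
    using L1[OF fin inj red _ tK, of "{x\<in>K. Suc (t \<sigma>) \<le> t x}"] Z[OF fin inj red tK, of "Suc (t \<sigma>)"] by auto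
  have "is_low K t R \<tau> \<sigma> \<longleftrightarrow> ((\<exists>i\<in>K. t \<sigma> \<le> t i \<and> R i \<tau> \<noteq> 0) \<and> (\<forall>i\<in>K. Suc (t \<sigma>) \<le> t i \<longrightarrow> R i \<tau> = 0))"
  proof
    assume l: "is_low K t R \<tau> \<sigma>"
    then show "(\<exists>i\<in>K. t \<sigma> \<le> t i \<and> R i \<tau> \<noteq> 0) \<and> (\<forall>i\<in>K. Suc (t \<sigma>) \<le> t i \<longrightarrow> R i \<tau> = 0)"
      unfolding is_low_def by force
  next
    assume a: "(\<exists>i\<in>K. t \<sigma> \<le> t i \<and> R i \<tau> \<noteq> 0) \<and> (\<forall>i\<in>K. Suc (t \<sigma>) \<le> t i \<longrightarrow> R i \<tau> = 0)"
    then obtain i1 where i1: "i1 \<in> K" "t \<sigma> \<le> t i1" "R i1 \<tau> \<noteq> 0" by blast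
    from low_exists[where t=t and R=R and j=\<tau>, OF fin i1(1) i1(3)] obtain l where l: "is_low K t R \<tau> l" by blast
    have lK: "l \<in> K" "R l \<tau> \<noteq> 0" using l unfolding is_low_def by auto
    have "t i1 \<le> t l" using low_ge[OF l i1(1) i1(3)] .
    moreover have "\<not> Suc (t \<sigma>) \<le> t l" using a lK by auto
    ultimately have "t l = t \<sigma>" using i1 by simp
    then have "l = \<sigma>" using inj_onD[OF inj] lK(1) sK by blast
    then show "is_low K t R \<tau> \<sigma>" using l by simp
  qed
  then show ?thesis using e1 e2 by blast
qed

lemma exists_reduc:
  fixes D :: "'v set \<Rightarrow> 'v set \<Rightarrow> 'k::field"
  assumes fin: "finite K" and inj: "inj_on t K"
  shows "\<exists>R V. reduc K t D R V"
proof -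
  define adm where "adm j w \<longleftrightarrow> (\<forall>k\<in>K. w k \<noteq> 0 \<longrightarrow> t k \<le> t j) \<and> w j \<noteq> (0::'k)" for j w
  define bnd where "bnd w m \<longleftrightarrow> (\<forall>i\<in>K. (\<Sum>k\<in>K. D i k * w k) \<noteq> 0 \<longrightarrow> t i < m)" for w m
  obtain M where M: "\<forall>x\<in>K. t x < M"
    using finite_nat_set_iff_bounded[of "t ` K"] fin by auto
  have ex: "\<exists>m w. adm j w \<and> bnd w m" for j
    by (rule exI[of _ M], rule exI[of _ "\<lambda>k. if k = j then 1 else 0"]) (simp add: adm_def bnd_def M)
  define m where "m j = (LEAST m. \<exists>w. adm j w \<and> bnd w m)" for j
  have mex: "\<exists>w. adm j w \<and> bnd w (m j)" for j
    unfolding m_def using ex[of j] by (rule LeastI_ex)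
  have mle: "m j \<le> m'" if "adm j w" "bnd w m'" for j w m'
    unfolding m_def by (rule Least_le) (use that in blast)
  define W where "W j = (SOME w. adm j w \<and> bnd w (m j))" for j
  have W: "adm j (W j) \<and> bnd (W j) (m j)" for j
    unfolding W_def using mex[of j] by (rule someI_ex)
  define V where "V k j = W j k" for k j
  define R where "R i j = (\<Sum>k\<in>K. D i k * V k j)" for i j
  have red3: "False" if jK: "j \<in> K" "j' \<in> K" and lt: "t j' < t j"
      and l1: "is_low K t R j i" and l2: "is_low K t R j' i" for j j' i
  proof -
    have iK: "i \<in> K" and nz1: "R i j \<noteq> 0" and nz2: "R i j' \<noteq> 0" using l1 l2 unfolding is_low_def by auto
    define c where "c = R i j / R i j'"
    define w where "w k = W j k - c * W j' k" for k
    have Wj: "\<forall>k\<in>K. W j k \<noteq> 0 \<longrightarrow> t k \<le> t j" "W j j \<noteq> 0" using W[of j] unfolding adm_def by auto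
    have Wj': "\<forall>k\<in>K. W j' k \<noteq> 0 \<longrightarrow> t k \<le> t j'" using W[of j'] unfolding adm_def by auto
    have Wj'j: "W j' j = 0" using Wj' jK lt by auto
    have "adm j w"
      unfolding adm_def
    proof (intro conjI ballI impI)
      show "w j \<noteq> 0" using Wj(2) Wj'j unfolding w_def by simp
      fix k assume k: "k \<in> K" "w k \<noteq> 0"
      then have "W j k \<noteq> 0 \<or> W j' k \<noteq> 0" unfolding w_def by auto
      then show "t k \<le> t j"
      proof
        assume "W j k \<noteq> 0" then show ?thesis using Wj(1) k by auto
      next
        assume "W j' k \<noteq> 0" then have "t k \<le> t j'" using Wj' k by auto
        then show ?thesis using lt by simp
      qed
    qed
    moreover have "bnd w (t i)"
      unfolding bnd_def
    proof (intro ballI impI)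
      fix i' assume i'K: "i' \<in> K" and nz: "(\<Sum>k\<in>K. D i' k * w k) \<noteq> 0"
      have eq: "(\<Sum>k\<in>K. D i' k * w k) = R i' j - c * R i' j'"
        unfolding w_def R_def V_def by (simp add: algebra_simps sum_subtractf sum_distrib_left)
      have "R i' j \<noteq> 0 \<or> R i' j' \<noteq> 0" using nz eq by auto
      then have le: "t i' \<le> t i" using l1 l2 i'K unfolding is_low_def by auto
      have "i' \<noteq> i" using nz eq nz2 unfolding c_def by auto
      then have "t i' \<noteq> t i" using inj_onD[OF inj] i'K iK by blast
      then show "t i' < t i" using le by simp
    qed
    ultimately have "m j \<le> t i" by (rule mle)
    moreover have "t i < m j" using W[of j] iK nz1 unfolding bnd_def R_def V_def by auto
    ultimately show False by simp
  qed
  have "reduc K t D R V"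
    unfolding reduc_def
  proof (intro conjI)
    show "\<forall>i\<in>K. \<forall>j\<in>K. R i j = (\<Sum>k\<in>K. D i k * V k j)" by (simp add: R_def)
    show "\<forall>k\<in>K. \<forall>j\<in>K. V k j \<noteq> 0 \<longrightarrow> t k \<le> t j" using W unfolding adm_def V_def by blast
    show "\<forall>j\<in>K. V j j \<noteq> 0" using W unfolding adm_def V_def by blast
    show "\<forall>j\<in>K. \<forall>j'\<in>K. \<forall>i. j \<noteq> j' \<and> is_low K t R j i \<and> is_low K t R j' i \<longrightarrow> False"
    proof (intro ballI allI impI)
      fix j j' i assume jK: "j \<in> K" "j' \<in> K" and h: "j \<noteq> j' \<and> is_low K t R j i \<and> is_low K t R j' i"
      have "t j \<noteq> t j'" using h inj_onD[OF inj] jK by blast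
      then show False
      proof (cases "t j' < t j")
        case True then show ?thesis using red3[of j j' i] jK h by blast
      next
        case False then have "t j < t j'" using \<open>t j \<noteq> t j'\<close> by simp
        then show ?thesis using red3[of j' j i] jK h by blast
      qed
    qed
  qed
  then show ?thesis by blast
qed

lemma path_step: "is_path n p \<Longrightarrow> s < 2*n \<Longrightarrow>
   p (Suc s) = (fst (p s) + 1, snd (p s)) \<or> p (Suc s) = (fst (p s), snd (p s) + 1)"
  unfolding is_path_def by blast

lemma path_mono_aux: "is_path n p \<Longrightarrow> s' \<le> 2*n \<Longrightarrow> s \<le> s' \<Longrightarrow> grade_le (p s) (p s')"
proof (induction s')
  case 0 then show ?case by (simp add: grade_le_def)
next
  case (Suc s')
  show ?case
  proof (cases "s = Suc s'")
    case True then show ?thesis by (simp add: grade_le_def)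
  next
    case False
    then have "grade_le (p s) (p s')" using Suc by simp
    moreover have "grade_le (p s') (p (Suc s'))"
      using path_step[OF Suc.prems(1), of s'] Suc.prems(2) by (auto simp: grade_le_def)
    ultimately show ?thesis unfolding grade_le_def by auto
  qed
qed

lemma path_mono: "is_path n p \<Longrightarrow> s \<le> s' \<Longrightarrow> s' \<le> 2*n \<Longrightarrow> grade_le (p s) (p s')"
  using path_mono_aux by blast

lemma path_grid: assumes "is_path n p" "s \<le> 2*n" shows "p s \<in> grid n"
proof -
  have "grade_le (p s) (p (2*n))" using path_mono[OF assms(1) assms(2)] by simp
  moreover have "p (2*n) = (n,n)" using assms(1) unfolding is_path_def by simp
  ultimately show ?thesis unfolding grade_le_def grid_def by (cases "p s") auto
qed

lemma Fmono: assumes "two_filtration K n F" "is_path n p" "s \<le> s'" "s' \<le> 2*n"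
  shows "F (p s) \<subseteq> F (p s')"
proof -
  have "p s \<in> grid n" "p s' \<in> grid n" using path_grid assms by auto
  moreover have "grade_le (p s) (p s')" using path_mono assms by blast
  ultimately show ?thesis using assms(1) unfolding two_filtration_def by blast
qed

lemma FK: "two_filtration K n F \<Longrightarrow> g \<in> grid n \<Longrightarrow> F g \<subseteq> K"
  unfolding two_filtration_def subcomplex_def by blast

lemma entry_ex1:
  assumes tf: "two_filtration K n F" and pa: "is_path n p" and xK: "x \<in> K"
  shows "\<exists>!i. i < 2*n \<and> x \<in> F (p (Suc i)) \<and> x \<notin> F (p i)"
proof
  have P2: "x \<in> F (p (2*n))" using tf pa xK unfolding two_filtration_def is_path_def by simp
  have P0: "x \<notin> F (p 0)" using tf pa unfolding two_filtration_def is_path_def by simp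
  define s0 where "s0 = (LEAST s. x \<in> F (p s))"
  have s0P: "x \<in> F (p s0)" unfolding s0_def using P2 by (rule LeastI)
  have s0le: "s0 \<le> 2*n" unfolding s0_def using P2 by (rule Least_le)
  have s0ne: "s0 \<noteq> 0" using s0P P0 by (cases s0) auto
  have "x \<notin> F (p (s0 - 1))" unfolding s0_def by (rule not_less_Least) (use s0ne s0_def in simp)
  then show "s0 - 1 < 2*n \<and> x \<in> F (p (Suc (s0 - 1))) \<and> x \<notin> F (p (s0 - 1))"
    using s0P s0le s0ne by simp
  fix i assume i: "i < 2*n \<and> x \<in> F (p (Suc i)) \<and> x \<notin> F (p i)"
  show "i = s0 - 1"
  proof (rule ccontr)
    assume ne: "i \<noteq> s0 - 1"
    show False
    proof (cases "i < s0 - 1")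
      case True
      then have "F (p (Suc i)) \<subseteq> F (p (s0 - 1))" using s0le by (intro Fmono[OF tf pa]) auto
      then show False using i \<open>x \<notin> F (p (s0 - 1))\<close> by auto
    next
      case False
      then have "s0 - 1 < i" using ne by simp
      then have "F (p (Suc (s0 - 1))) \<subseteq> F (p i)" using i by (intro Fmono[OF tf pa]) auto
      then show False using i s0P s0ne by auto
    qed
  qed
qed

lemma entry_props:
  assumes tf: "two_filtration K n F" and pa: "is_path n p" and xK: "x \<in> K"
  shows "entry_time n F p x < 2*n \<and> x \<in> F (p (Suc (entry_time n F p x))) \<and> x \<notin> F (p (entry_time n F p x))"
  unfolding entry_time_def using theI'[OF entry_ex1[OF assms]] .

lemma entry_eq:
  assumes tf: "two_filtration K n F" and pa: "is_path n p" and xK: "x \<in> K"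
    and "i < 2*n" "x \<in> F (p (Suc i))" "x \<notin> F (p i)"
  shows "entry_time n F p x = i"
  using entry_ex1[OF tf pa xK] entry_props[OF tf pa xK] assms(4-6) by blast

lemma mem_iff:
  assumes tf: "two_filtration K n F" and pa: "is_path n p" and xK: "x \<in> K" and s: "s \<le> 2*n"
  shows "x \<in> F (p s) \<longleftrightarrow> entry_time n F p x < s"
proof -
  note e = entry_props[OF tf pa xK]
  show ?thesis
  proof
    assume a: "x \<in> F (p s)"
    show "entry_time n F p x < s"
    proof (rule ccontr)
      assume "\<not> entry_time n F p x < s"
      then have "F (p s) \<subseteq> F (p (entry_time n F p x))" using e by (intro Fmono[OF tf pa]) auto
      then show False using a e by auto
    qed
  next
    assume "entry_time n F p x < s"
    then have "F (p (Suc (entry_time n F p x))) \<subseteq> F (p s)" using s by (intro Fmono[OF tf pa]) auto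
    then show "x \<in> F (p s)" using e by auto
  qed
qed

lemma step_entry:
  assumes tf: "two_filtration K n F" and pa: "is_path n p" and st: "takes_step n p g h"
    and "x \<in> F h" "x \<notin> F g"
  shows "x \<in> K \<and> g = p (entry_time n F p x) \<and> h = p (Suc (entry_time n F p x))"
proof -
  obtain s where s: "s < 2*n" "p s = g" "p (Suc s) = h" using st unfolding takes_step_def by blast
  have "h \<in> grid n" using path_grid[OF pa, of "Suc s"] s by simp
  then have xK: "x \<in> K" using FK[OF tf] assms(4) by blast
  have "entry_time n F p x = s" using entry_eq[OF tf pa xK s(1)] s assms(4,5) by simp
  then show ?thesis using xK s by simp
qed

lemma corner:
  assumes tf: "two_filtration K n F" and h: "h \<in> grid n" and x: "x \<in> F h"
  shows "\<exists>c\<in>lower_corners n F x. grade_le c h"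
proof -
  let ?P = "\<lambda>c. c \<in> grid n \<and> x \<in> F c \<and> grade_le c h"
  have "?P h" using h x by (simp add: grade_le_def)
  from ex_has_least_nat[of ?P h "\<lambda>c. fst c + snd c", OF this]
  obtain c where c: "?P c" and cmin: "\<And>y. ?P y \<Longrightarrow> fst c + snd c \<le> fst y + snd y" by blast
  have "c \<in> lower_corners n F x"
    unfolding lower_corners_def
  proof (intro CollectI conjI ballI impI)
    show "c \<in> grid n" "x \<in> F c" using c by auto
    fix h' assume h': "h' \<in> grid n" "x \<in> F h' \<and> grade_le h' c"
    then have "?P h'" using c unfolding grade_le_def by auto
    then have "fst c + snd c \<le> fst h' + snd h'" by (rule cmin)
    then show "h' = c" using h'(2) unfolding grade_le_def by (simp add: prod_eq_iff)
  qed
  then show ?thesis using c by blast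
qed

lemma corner_step:
  assumes tf: "two_filtration K n F" and pa: "is_path n p" and xK: "x \<in> K"
  defines "e \<equiv> entry_time n F p x"
  shows "\<exists>c\<in>lower_corners n F x.
     (p (Suc e) = (fst (p e) + 1, snd (p e)) \<and> fst c = fst (p e) + 1) \<or>
     (p (Suc e) = (fst (p e), snd (p e) + 1) \<and> snd c = snd (p e) + 1)"
proof -
  note ep = entry_props[OF tf pa xK, folded e_def]
  have hg: "p (Suc e) \<in> grid n" "p e \<in> grid n" using path_grid[OF pa] ep by auto
  obtain c where c: "c \<in> lower_corners n F x" "grade_le c (p (Suc e))"
    using corner[OF tf hg(1)] ep by blast
  have cg: "c \<in> grid n" "x \<in> F c" using c unfolding lower_corners_def by auto
  have ncg: "\<not> grade_le c (p e)"
  proof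
    assume "grade_le c (p e)"
    then have "F c \<subseteq> F (p e)" using tf cg hg unfolding two_filtration_def by blast
    then show False using cg ep by auto
  qed
  from path_step[OF pa, of e] ep have "p (Suc e) = (fst (p e) + 1, snd (p e)) \<or> p (Suc e) = (fst (p e), snd (p e) + 1)" by simp
  then show ?thesis
  proof
    assume a: "p (Suc e) = (fst (p e) + 1, snd (p e))"
    then have "fst c = fst (p e) + 1" using c(2) ncg unfolding grade_le_def by auto
    then show ?thesis using a c(1) by blast
  next
    assume a: "p (Suc e) = (fst (p e), snd (p e) + 1)"
    then have "snd c = snd (p e) + 1" using c(2) ncg unfolding grade_le_def by auto
    then show ?thesis using a c(1) by blast
  qed
qed

lemma inj_entry:
  assumes tf: "two_filtration K n F" and nd: "non_degenerate K n F" and pa: "is_path n p"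
  shows "inj_on (entry_time n F p) K"
proof (rule inj_onI)
  fix x y assume xK: "x \<in> K" and yK: "y \<in> K" and eq: "entry_time n F p x = entry_time n F p y"
  obtain cx where cx: "cx \<in> lower_corners n F x"
     "(p (Suc (entry_time n F p x)) = (fst (p (entry_time n F p x)) + 1, snd (p (entry_time n F p x))) \<and> fst cx = fst (p (entry_time n F p x)) + 1) \<or>
     (p (Suc (entry_time n F p x)) = (fst (p (entry_time n F p x)), snd (p (entry_time n F p x)) + 1) \<and> snd cx = snd (p (entry_time n F p x)) + 1)"
    using corner_step[OF tf pa xK] by blast
  obtain cy where cy: "cy \<in> lower_corners n F y"
     "(p (Suc (entry_time n F p x)) = (fst (p (entry_time n F p x)) + 1, snd (p (entry_time n F p x))) \<and> fst cy = fst (p (entry_time n F p x)) + 1) \<or>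
     (p (Suc (entry_time n F p x)) = (fst (p (entry_time n F p x)), snd (p (entry_time n F p x)) + 1) \<and> snd cy = snd (p (entry_time n F p x)) + 1)"
    using corner_step[OF tf pa yK] eq by metis
  have "fst cx = fst cy \<or> snd cx = snd cy" using cx(2) cy(2) by auto
  then have "(x, cx) = (y, cy)" using nd xK yK cx(1) cy(1) unfolding non_degenerate_def by blast
  then show "x = y" by simp
qed

lemma paired_iff:
  "paired TYPE('k::field) K n F p a b \<longleftrightarrow>
    (\<exists>(R :: 'v::linorder set \<Rightarrow> 'v set \<Rightarrow> 'k) V. reduc K (entry_time n F p) bd_coeff R V \<and> is_low K (entry_time n F p) R b a)"
  unfolding paired_def reduc_def Let_def by (simp only: conj_assoc)

theorem mainTheorem6:
  fixes K :: "'v::linorder set set"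
    and n :: nat
    and F :: "nat \<times> nat \<Rightarrow> 'v set set"
    and p q :: "nat \<Rightarrow> nat \<times> nat"
    and \<sigma> \<tau> :: "'v set"
    and g1 h1 g2 h2 :: "nat \<times> nat"
  assumes "simplicial_complex K"
    and "two_filtration K n F"
    and "non_degenerate K n F"
    and "is_path n p"
    and "takes_step n p g1 h1" and "\<sigma> \<in> F h1" and "\<sigma> \<notin> F g1"
    and "takes_step n p g2 h2" and "\<tau> \<in> F h2" and "\<tau> \<notin> F g2"
    and "paired TYPE('k::field) K n F p \<sigma> \<tau>"
  shows "\<forall>q. is_path n q \<and> takes_step n q g1 h1 \<and> takes_step n q g2 h2
           \<longrightarrow> paired TYPE('k) K n F q \<sigma> \<tau>"
proof (intro allI impI)
  fix q assume qa: "is_path n q \<and> takes_step n q g1 h1 \<and> takes_step n q g2 h2"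
  note tf = assms(2) and nd = assms(3) and pa = assms(4)
  have qp: "is_path n q" using qa by simp
  have fin: "finite K" using assms(1) unfolding simplicial_complex_def by simp
  define tp where "tp = entry_time n F p"
  define tq where "tq = entry_time n F q"
  have injp: "inj_on tp K" unfolding tp_def by (rule inj_entry[OF tf nd pa])
  have injq: "inj_on tq K" unfolding tq_def by (rule inj_entry[OF tf nd qp])
  have sp1: "\<sigma> \<in> K" "g1 = p (tp \<sigma>)" "h1 = p (Suc (tp \<sigma>))"
    using step_entry[OF tf pa assms(5,6,7)] unfolding tp_def by auto
  have sp2: "\<tau> \<in> K" "g2 = p (tp \<tau>)"
    using step_entry[OF tf pa assms(8,9,10)] unfolding tp_def by auto
  have sq1: "g1 = q (tq \<sigma>)" "h1 = q (Suc (tq \<sigma>))"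
    using step_entry[OF tf qp _ assms(6,7)] qa unfolding tq_def by auto
  have sq2: "g2 = q (tq \<tau>)"
    using step_entry[OF tf qp _ assms(9,10)] qa unfolding tq_def by auto
  have ltp: "tp \<sigma> < 2*n" "tp \<tau> < 2*n" using entry_props[OF tf pa] sp1(1) sp2(1) unfolding tp_def by auto
  have ltq: "tq \<sigma> < 2*n" "tq \<tau> < 2*n" using entry_props[OF tf qp] sp1(1) sp2(1) unfolding tq_def by auto
  have A1: "{x\<in>K. tp \<sigma> \<le> tp x} = {x\<in>K. tq \<sigma> \<le> tq x}"
  proof -
    have "{x\<in>K. tp \<sigma> \<le> tp x} = {x\<in>K. x \<notin> F g1}"
      using mem_iff[OF tf pa _, of _ "tp \<sigma>"] ltp sp1 unfolding tp_def by (auto simp: not_less)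
    moreover have "{x\<in>K. tq \<sigma> \<le> tq x} = {x\<in>K. x \<notin> F g1}"
      using mem_iff[OF tf qp _, of _ "tq \<sigma>"] ltq sq1 unfolding tq_def by (auto simp: not_less)
    ultimately show ?thesis by simp
  qed
  have A2: "{x\<in>K. Suc (tp \<sigma>) \<le> tp x} = {x\<in>K. Suc (tq \<sigma>) \<le> tq x}"
  proof -
    have "{x\<in>K. Suc (tp \<sigma>) \<le> tp x} = {x\<in>K. x \<notin> F h1}"
      using mem_iff[OF tf pa _, of _ "Suc (tp \<sigma>)"] ltp sp1 unfolding tp_def by (auto simp: not_less)
    moreover have "{x\<in>K. Suc (tq \<sigma>) \<le> tq x} = {x\<in>K. x \<notin> F h1}"
      using mem_iff[OF tf qp _, of _ "Suc (tq \<sigma>)"] ltq sq1 unfolding tq_def by (auto simp: not_less)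
    ultimately show ?thesis by simp
  qed
  have C: "{x\<in>K. tp x < tp \<tau>} = {x\<in>K. tq x < tq \<tau>}"
  proof -
    have "{x\<in>K. tp x < tp \<tau>} = {x\<in>K. x \<in> F g2}"
      using mem_iff[OF tf pa _, of _ "tp \<tau>"] ltp sp2 unfolding tp_def by auto
    moreover have "{x\<in>K. tq x < tq \<tau>} = {x\<in>K. x \<in> F g2}"
      using mem_iff[OF tf qp _, of _ "tq \<tau>"] ltq sq2 unfolding tq_def by auto
    ultimately show ?thesis by simp
  qed
  obtain R V where RV: "reduc K tp (bd_coeff :: 'v set \<Rightarrow> 'v set \<Rightarrow> 'k) R V" "is_low K tp R \<tau> \<sigma>"
    using assms(11) unfolding paired_iff tp_def by blast
  have P: "\<not> sp (bd_coeff :: 'v set \<Rightarrow> 'v set \<Rightarrow> 'k) {x\<in>K. tp \<sigma> \<le> tp x} {x\<in>K. tp x < tp \<tau>} (\<lambda>i. bd_coeff i \<tau>) \<and>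
     sp (bd_coeff :: 'v set \<Rightarrow> 'v set \<Rightarrow> 'k) {x\<in>K. Suc (tp \<sigma>) \<le> tp x} {x\<in>K. tp x < tp \<tau>} (\<lambda>i. bd_coeff i \<tau>)"
    using key[OF fin injp RV(1) sp1(1) sp2(1)] RV(2) by blast
  obtain R' V' where RV': "reduc K tq (bd_coeff :: 'v set \<Rightarrow> 'v set \<Rightarrow> 'k) R' V'"
    using exists_reduc[OF fin injq] by blast
  have "is_low K tq R' \<tau> \<sigma>"
    using key[OF fin injq RV'(1) sp1(1) sp2(1)] P unfolding A1 A2 C by blast
  then show "paired TYPE('k) K n F q \<sigma> \<tau>"
    unfolding paired_iff tq_def[symmetric] using RV' by blast
qed

end
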